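(* Suppose $G_{\text{hon}}$ is connected. For each $l\in[n]$ let $\bar\tau(l)=\inf\{j\in\mathbb N:|\bar{\mathcal I}_j|=l\}$. Then for all $l,j\in\mathbb N$ with $l\le n$, $$\mathbb P(\bar\tau(l)>lj)\le l\,(1-\Upsilon/\bar d_{\text{hon}})^j.$$
   Context: $G=([n+m],E)$ undirected, honest agents $[n]$; for $i\in[n]$, $N_{\text{hon}}(i)$ its honest neighbors, $d_{\text{hon}}(i)=|N_{\text{hon}}(i)|$, $d(i)$ its total degree, $\bar d_{\text{hon}}=\max_{i\in[n]}d_{\text{hon}}(i)$; $G_{\text{hon}}$ the honest subgraph; $\Upsilon=\min_{i\in[n]}d_{\text{hon}}(i)/d(i)$; $i^\star\in[n]$ fixed. Noisy rumor process: independent $\bar Y_j^{(i)}\sim$Bernoulli$(\Upsilon)$, $\bar H_j^{(i)}\sim$Uniform$(N_{\text{hon}}(i))$; $\bar{\mathcal I}_0=\{i^\star\}$, $\bar{\mathcal I}_j=\bar{\mathcal I}_{j-1}\cup\{i\notin\bar{\mathcal I}_{j-1}:\bar Y_j^{(i)}=1,\bar H_j^{(i)}\in\bar{\mathcal I}_{j-1}\}$ for $j\ge1$. (Convention: $\bar\tau(1)=1$, i.e. the infimum is over $j\ge1$.) *)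

theory Defs
  imports "HOL-Probability.Probability"
begin

text \<open>Graph on vertices {1..n+m}, given by an edge relation E; honest agents are {1..n}.\<close>

definition deg :: "(nat \<Rightarrow> nat \<Rightarrow> bool) \<Rightarrow> nat \<Rightarrow> nat \<Rightarrow> nat \<Rightarrow> nat" where
  "deg E n m i = card {v \<in> {1..n+m}. E i v}"

definition Nhon :: "(nat \<Rightarrow> nat \<Rightarrow> bool) \<Rightarrow> nat \<Rightarrow> nat \<Rightarrow> nat set" where
  "Nhon E n i = {v \<in> {1..n}. E i v}"

definition dhon :: "(nat \<Rightarrow> nat \<Rightarrow> bool) \<Rightarrow> nat \<Rightarrow> nat \<Rightarrow> nat" where
  "dhon E n i = card (Nhon E n i)"

definition dhon_max :: "(nat \<Rightarrow> nat \<Rightarrow> bool) \<Rightarrow> nat \<Rightarrow> nat" where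
  "dhon_max E n = Max (dhon E n ` {1..n})"

definition Upsilon :: "(nat \<Rightarrow> nat \<Rightarrow> bool) \<Rightarrow> nat \<Rightarrow> nat \<Rightarrow> real" where
  "Upsilon E n m = Min ((\<lambda>i. real (dhon E n i) / real (deg E n m i)) ` {1..n})"

definition hon_connected :: "(nat \<Rightarrow> nat \<Rightarrow> bool) \<Rightarrow> nat \<Rightarrow> bool" where
  "hon_connected E n \<longleftrightarrow>
     (\<forall>u\<in>{1..n}. \<forall>v\<in>{1..n}.
        (u, v) \<in> ({(a, b). a \<in> {1..n} \<and> b \<in> {1..n} \<and> E a b})\<^sup>*)"

text \<open>Sample point: omega (j, i) = (Y_j^(i), H_j^(i)).\<close>
definition noisy_space ::
  "(nat \<Rightarrow> nat \<Rightarrow> bool) \<Rightarrow> nat \<Rightarrow> nat \<Rightarrow> (nat \<times> nat \<Rightarrow> bool \<times> nat) measure" where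
  "noisy_space E n m = PiM UNIV (\<lambda>(j, i).
      measure_pmf (pair_pmf (bernoulli_pmf (Upsilon E n m)) (pmf_of_set (Nhon E n i))))"

fun infected :: "nat \<Rightarrow> nat \<Rightarrow> (nat \<times> nat \<Rightarrow> bool \<times> nat) \<Rightarrow> nat \<Rightarrow> nat set" where
  "infected n istar \<omega> 0 = {istar}"
| "infected n istar \<omega> (Suc j) = infected n istar \<omega> j \<union>
     {i \<in> {1..n}. i \<notin> infected n istar \<omega> j \<and> fst (\<omega> (Suc j, i))
        \<and> snd (\<omega> (Suc j, i)) \<in> infected n istar \<omega> j}"

definition tau :: "nat \<Rightarrow> nat \<Rightarrow> (nat \<times> nat \<Rightarrow> bool \<times> nat) \<Rightarrow> nat \<Rightarrow> enat" where
  "tau n istar \<omega> l =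
     (if \<exists>j\<ge>1. card (infected n istar \<omega> j) \<ge> l
      then enat (LEAST j. j \<ge> 1 \<and> card (infected n istar \<omega> j) \<ge> l) else \<infinity>)"

end

theory Submission
  imports Defs
begin


definition stepf :: "nat \<Rightarrow> nat set \<Rightarrow> (nat \<Rightarrow> bool \<times> nat) \<Rightarrow> nat set" where
  "stepf n S x = S \<union> {i \<in> {1..n}. i \<notin> S \<and> fst (x i) \<and> snd (x i) \<in> S}"

fun infS :: "nat \<Rightarrow> nat set \<Rightarrow> (nat \<times> nat \<Rightarrow> bool \<times> nat) \<Rightarrow> nat \<Rightarrow> nat set" where
  "infS n S \<omega> 0 = S"
| "infS n S \<omega> (Suc t) = stepf n (infS n S \<omega> t) (\<lambda>i. \<omega> (Suc t, i))"

lemma infected_infS: "infected n istar \<omega> t = infS n {istar} \<omega> t"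
  by (induction t) (auto simp: stepf_def)

lemma stepf_cong: "(\<And>i. i \<in> {1..n} \<Longrightarrow> x i = y i) \<Longrightarrow> stepf n S x = stepf n S y"
  unfolding stepf_def by auto

lemma infS_cong: "(\<And>s i. s \<in> {1..t} \<Longrightarrow> i \<in> {1..n} \<Longrightarrow> \<omega> (s, i) = \<omega>' (s, i))
   \<Longrightarrow> infS n S \<omega> t = infS n S \<omega>' t"
proof (induction t)
  case 0 then show ?case by simp
next
  case (Suc t)
  have "infS n S \<omega> t = infS n S \<omega>' t" using Suc by auto
  moreover have "stepf n T (\<lambda>i. \<omega> (Suc t, i)) = stepf n T (\<lambda>i. \<omega>' (Suc t, i))" for T
    by (rule stepf_cong) (use Suc.prems in auto)
  ultimately show ?case by simp
qed

lemma infS_mono: "S \<subseteq> infS n S \<omega> t"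
  by (induction t) (auto simp: stepf_def)

lemma infS_mono2: "s \<le> t \<Longrightarrow> infS n S \<omega> s \<subseteq> infS n S \<omega> t"
proof (induction t)
  case 0 then show ?case by simp
next
  case (Suc t) then show ?case by (cases "s = Suc t") (auto simp: stepf_def le_Suc_eq)
qed

definition stepT :: "nat \<Rightarrow> (nat \<times> nat \<Rightarrow> (bool \<times> nat) pmf) \<Rightarrow> nat \<Rightarrow> nat set \<Rightarrow> nat set pmf" where
  "stepT n K t S = map_pmf (\<lambda>g. stepf n S (\<lambda>i. g (Suc t, i))) (Pi_pmf ({Suc t} \<times> {1..n}) (False, 0) K)"

fun chain :: "nat \<Rightarrow> (nat \<times> nat \<Rightarrow> (bool \<times> nat) pmf) \<Rightarrow> nat \<Rightarrow> nat set \<Rightarrow> nat \<Rightarrow> nat set pmf" where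
  "chain n K a S 0 = return_pmf S"
| "chain n K a S (Suc t) = bind_pmf (chain n K a S t) (stepT n K (a + t))"

lemma chain_add: "chain n K a S (b + c) = bind_pmf (chain n K a S b) (\<lambda>T. chain n K (a + b) T c)"
proof (induction c)
  case 0 then show ?case by (simp add: bind_return_pmf')
next
  case (Suc c) then show ?case by (simp add: bind_assoc_pmf add.assoc)
qed

lemma set_stepT: "T \<in> set_pmf (stepT n K t S) \<Longrightarrow> S \<subseteq> T \<and> T \<subseteq> S \<union> {1..n}"
  unfolding stepT_def stepf_def by auto

lemma set_chain: "T \<in> set_pmf (chain n K a S t) \<Longrightarrow> S \<subseteq> T \<and> T \<subseteq> S \<union> {1..n}"
proof (induction t arbitrary: T)
  case 0 then show ?case by simp
next
  case (Suc t)
  then obtain U where "U \<in> set_pmf (chain n K a S t)" "T \<in> set_pmf (stepT n K (a + t) U)" by auto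
  with Suc.IH set_stepT show ?case by blast
qed

definition Jset :: "nat \<Rightarrow> nat \<Rightarrow> (nat \<times> nat) set" where
  "Jset n t = {1..t} \<times> {1..n}"

lemma chain_bridge: "map_pmf (\<lambda>f. infS n S f t) (Pi_pmf (Jset n t) (False, 0) K) = chain n K 0 S t"
proof (induction t)
  case 0 then show ?case by (simp add: Jset_def)
next
  case (Suc t)
  let ?A = "Jset n t" and ?B = "{Suc t} \<times> {1..n}"
  have J: "Jset n (Suc t) = ?A \<union> ?B" by (auto simp: Jset_def)
  have d: "?A \<inter> ?B = {}" by (auto simp: Jset_def)
  have fin: "finite ?A" "finite ?B" by (auto simp: Jset_def)
  have eq: "infS n S (\<lambda>x. if x \<in> ?A then f x else g x) (Suc t) = stepf n (infS n S f t) (\<lambda>i. g (Suc t, i))" for f g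
  proof -
    have "infS n S (\<lambda>x. if x \<in> ?A then f x else g x) t = infS n S f t"
      by (rule infS_cong) (auto simp: Jset_def)
    moreover have "stepf n T (\<lambda>i. (\<lambda>x. if x \<in> ?A then f x else g x) (Suc t, i)) = stepf n T (\<lambda>i. g (Suc t, i))" for T
      by (rule stepf_cong) (auto simp: Jset_def)
    ultimately show ?thesis by simp
  qed
  have "map_pmf (\<lambda>f. infS n S f (Suc t)) (Pi_pmf (Jset n (Suc t)) (False, 0) K)
     = map_pmf (\<lambda>(f, g). stepf n (infS n S f t) (\<lambda>i. g (Suc t, i))) (pair_pmf (Pi_pmf ?A (False, 0) K) (Pi_pmf ?B (False, 0) K))"
    unfolding J Pi_pmf_union[OF fin d] pmf.map_comp o_def case_prod_unfold eq by (rule refl)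
  also have "\<dots> = bind_pmf (map_pmf (\<lambda>f. infS n S f t) (Pi_pmf ?A (False, 0) K)) (stepT n K t)"
    by (simp add: pair_pmf_def map_bind_pmf bind_map_pmf stepT_def map_pmf_def bind_assoc_pmf bind_return_pmf)
  finally show ?case using Suc by simp
qed



lemma emeasure_single_zero: "x \<notin> set_pmf p \<Longrightarrow> emeasure (measure_pmf p) {x} = 0"
  by (simp add: emeasure_pmf_single set_pmf_iff)

lemma lemB:
  assumes hyp: "\<And>t S. S \<subseteq> {1..n} \<Longrightarrow> S \<noteq> {} \<Longrightarrow> S \<noteq> {1..n} \<Longrightarrow> emeasure (measure_pmf (stepT n K t S)) {S} \<le> ennreal q"
    and q: "0 \<le> q"
    and S: "S \<subseteq> {1..n}" "S \<noteq> {}" "S \<noteq> {1..n}"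
  shows "emeasure (measure_pmf (chain n K a S j)) {S} \<le> ennreal (q ^ j)"
proof (induction j)
  case 0 then show ?case by simp
next
  case (Suc j)
  have "emeasure (measure_pmf (chain n K a S (Suc j))) {S}
      = (\<integral>\<^sup>+T. emeasure (measure_pmf (stepT n K (a + j) T)) {S} \<partial>measure_pmf (chain n K a S j))"
    by simp
  also have "\<dots> \<le> (\<integral>\<^sup>+T. ennreal q * indicator {S} T \<partial>measure_pmf (chain n K a S j))"
  proof (rule nn_integral_mono_AE, rule AE_pmfI)
    fix T assume T: "T \<in> set_pmf (chain n K a S j)"
    show "emeasure (measure_pmf (stepT n K (a + j) T)) {S} \<le> ennreal q * indicator {S} T"
    proof (cases "T = S")
      case True then show ?thesis using hyp[OF S] by simp
    next
      case False
      with set_chain[OF T] have "S \<notin> set_pmf (stepT n K (a + j) T)" using set_stepT by blast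
      then show ?thesis by (simp add: emeasure_single_zero)
    qed
  qed
  also have "\<dots> = ennreal q * emeasure (measure_pmf (chain n K a S j)) {S}"
    by (simp add: nn_integral_cmult_indicator)
  also have "\<dots> \<le> ennreal q * ennreal (q ^ j)"
    using Suc by (intro mult_left_mono) auto
  also have "\<dots> = ennreal (q ^ Suc j)"
    using q by (simp add: ennreal_mult[symmetric])
  finally show ?case .
qed

lemma lemC:
  assumes hyp: "\<And>t S. S \<subseteq> {1..n} \<Longrightarrow> S \<noteq> {} \<Longrightarrow> S \<noteq> {1..n} \<Longrightarrow> emeasure (measure_pmf (stepT n K t S)) {S} \<le> ennreal q"
    and q: "0 \<le> q"
  shows "S \<subseteq> {1..n} \<Longrightarrow> S \<noteq> {} \<Longrightarrow> l \<le> card S + k \<Longrightarrow> l \<le> n \<Longrightarrow>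
    emeasure (measure_pmf (chain n K a S (k * j))) {T. card T < l} \<le> ennreal (real k * q ^ j)"
proof (induction k arbitrary: a S)
  case 0
  then show ?case by simp
next
  case (Suc k)
  have finS: "finite S" using Suc.prems(1) finite_subset by blast
  show ?case
  proof (cases "l \<le> card S")
    case True
    have "emeasure (measure_pmf (chain n K a S (Suc k * j))) {T. card T < l} = 0"
    proof (rule null_setsD1, rule in_null_sets_measure_pmfI, rule ccontr)
      assume "{T. card T < l} \<inter> set_pmf (chain n K a S (Suc k * j)) \<noteq> {}"
      then obtain T where T: "T \<in> set_pmf (chain n K a S (Suc k * j))" "card T < l" by auto
      then have "S \<subseteq> T" "finite T" using set_chain[OF T(1)] finS by (auto intro: finite_subset)
      then have "card S \<le> card T" by (simp add: card_mono)
      then show False using True T by simp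
    qed
    then show ?thesis by simp
  next
    case False
    have Sne: "S \<noteq> {1..n}" using False Suc.prems(4) by auto
    have "emeasure (measure_pmf (chain n K a S (Suc k * j))) {T. card T < l}
        = (\<integral>\<^sup>+T. emeasure (measure_pmf (chain n K (a + j) T (k * j))) {T. card T < l} \<partial>measure_pmf (chain n K a S j))"
      by (simp add: chain_add)
    also have "\<dots> \<le> (\<integral>\<^sup>+T. indicator {S} T + ennreal (real k * q ^ j) \<partial>measure_pmf (chain n K a S j))"
    proof (rule nn_integral_mono_AE, rule AE_pmfI)
      fix T assume T: "T \<in> set_pmf (chain n K a S j)"
      show "emeasure (measure_pmf (chain n K (a + j) T (k * j))) {T. card T < l} \<le> indicator {S} T + ennreal (real k * q ^ j)"
      proof (cases "T = S")
        case True then show ?thesis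
          by (simp add: measure_pmf.emeasure_le_1 add_increasing2)
      next
        case False
        from set_chain[OF T] have sub: "S \<subset> T" "T \<subseteq> {1..n}" using False Suc.prems(1) by auto
        then have "card S < card T" by (intro psubset_card_mono) (auto intro: finite_subset)
        then have "l \<le> card T + k" using Suc.prems(3) by simp
        then have "emeasure (measure_pmf (chain n K (a + j) T (k * j))) {T. card T < l} \<le> ennreal (real k * q ^ j)"
          using Suc.IH[of T "a + j"] sub Suc.prems by auto
        then show ?thesis using False by simp
      qed
    qed
    also have "\<dots> = emeasure (measure_pmf (chain n K a S j)) {S} + ennreal (real k * q ^ j)"
      by (simp add: nn_integral_add measure_pmf.emeasure_space_1)
    also have "\<dots> \<le> ennreal (q ^ j) + ennreal (real k * q ^ j)"
      using lemB[OF hyp q Suc.prems(1,2) Sne] by (intro add_right_mono)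
    also have "\<dots> = ennreal (real (Suc k) * q ^ j)"
      using q by (simp add: ennreal_plus[symmetric] algebra_simps del: ennreal_plus)
    finally show ?thesis .
  qed
qed



lemma boundary_edge:
  assumes "(a, b) \<in> R\<^sup>*" "a \<in> S" "b \<notin> S"
  shows "\<exists>x y. x \<in> S \<and> y \<notin> S \<and> (x, y) \<in> R"
  using assms
proof (induction rule: rtrancl_induct)
  case base then show ?case by simp
next
  case (step y z) then show ?case by (cases "y \<in> S") auto
qed

lemma Upsilon_bounds:
  assumes verts: "\<And>u v. E u v \<Longrightarrow> u \<in> {1..n+m} \<and> v \<in> {1..n+m}" and n: "1 \<le> n"
  shows "0 \<le> Upsilon E n m" "Upsilon E n m \<le> 1"
proof -
  let ?f = "\<lambda>i. real (dhon E n i) / real (deg E n m i)"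
  have "Upsilon E n m \<in> ?f ` {1..n}" unfolding Upsilon_def using n by (intro Min_in) auto
  then obtain i where i: "Upsilon E n m = ?f i" by auto
  have "Nhon E n i \<subseteq> {v \<in> {1..n+m}. E i v}" unfolding Nhon_def by auto
  then have "dhon E n i \<le> deg E n m i" unfolding dhon_def deg_def by (intro card_mono) auto
  then show "0 \<le> Upsilon E n m" "Upsilon E n m \<le> 1" using i
    by (auto simp: divide_le_eq_1)
qed

definition KK :: "(nat \<Rightarrow> nat \<Rightarrow> bool) \<Rightarrow> nat \<Rightarrow> nat \<Rightarrow> nat \<times> nat \<Rightarrow> (bool \<times> nat) pmf" where
  "KK E n m = (\<lambda>(j, i). pair_pmf (bernoulli_pmf (Upsilon E n m)) (pmf_of_set (Nhon E n i)))"

lemma lemA: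
  assumes sym: "\<And>u v. E u v \<Longrightarrow> E v u"
    and verts: "\<And>u v. E u v \<Longrightarrow> u \<in> {1..n+m} \<and> v \<in> {1..n+m}"
    and conn: "hon_connected E n"
    and S: "S \<subseteq> {1..n}" "S \<noteq> {}" "S \<noteq> {1..n}"
  shows "emeasure (measure_pmf (stepT n (KK E n m) t S)) {S} \<le> ennreal (1 - Upsilon E n m / real (dhon_max E n))"
proof -
  let ?U = "Upsilon E n m" and ?D = "dhon_max E n"
  obtain s0 where s0: "s0 \<in> S" using S by auto
  obtain v where v: "v \<in> {1..n}" "v \<notin> S" using S by blast
  have n: "1 \<le> n" using s0 S by auto
  have "(s0, v) \<in> {(a, b). a \<in> {1..n} \<and> b \<in> {1..n} \<and> E a b}\<^sup>*"
    using conn s0 S v unfolding hon_connected_def by auto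
  from boundary_edge[OF this s0 v(2)] obtain s i where si: "s \<in> S" "i \<notin> S" "s \<in> {1..n}" "i \<in> {1..n}" "E i s"
    using sym by auto
  define N where "N = Nhon E n i"
  have finN: "finite N" "N \<noteq> {}" "s \<in> N" using si by (auto simp: N_def Nhon_def)
  have cN: "1 \<le> card (N \<inter> S)" using finN si by (metis IntI card_0_eq finite_Int empty_iff less_one not_less)
  have NS: "card (N \<inter> S) \<le> card N" using finN by (intro card_mono) auto
  have ND: "card N \<le> ?D" unfolding dhon_max_def N_def dhon_def
    using si by (intro Max_ge) auto
  have N1: "1 \<le> card N" using finN by (simp add: Suc_le_eq card_gt_0_iff)
  have U: "0 \<le> ?U" "?U \<le> 1" using Upsilon_bounds[OF verts n] by auto
  let ?x = "(Suc t, i)"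
  let ?P = "Pi_pmf ({Suc t} \<times> {1..n}) (False, 0) (KK E n m)"
  have "measure (measure_pmf (stepT n (KK E n m) t S)) {S}
      \<le> measure (measure_pmf ?P) {g. g ?x \<in> - ({True} \<times> S)}"
    unfolding stepT_def measure_map_pmf
  proof (rule measure_pmf.finite_measure_mono)
    show "(\<lambda>g. stepf n S (\<lambda>i. g (Suc t, i))) -` {S} \<subseteq> {g. g ?x \<in> - ({True} \<times> S)}"
    proof
      fix g assume "g \<in> (\<lambda>g. stepf n S (\<lambda>i. g (Suc t, i))) -` {S}"
      then have eq: "stepf n S (\<lambda>i. g (Suc t, i)) = S" by simp
      show "g \<in> {g. g ?x \<in> - ({True} \<times> S)}"
      proof (rule ccontr)
        assume "g \<notin> {g. g ?x \<in> - ({True} \<times> S)}"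
        then have "fst (g ?x)" "snd (g ?x) \<in> S" by (auto simp: mem_Times_iff)
        then have "i \<in> stepf n S (\<lambda>i. g (Suc t, i))" using si by (simp add: stepf_def)
        with eq si show False by simp
      qed
    qed
  qed simp
  also have "\<dots> = measure (measure_pmf (map_pmf (\<lambda>g. g ?x) ?P)) (- ({True} \<times> S))"
    by (simp add: vimage_def)
  also have "map_pmf (\<lambda>g. g ?x) ?P = KK E n m ?x"
    by (subst Pi_pmf_component) (use si in auto)
  also have "measure (measure_pmf (KK E n m ?x)) (- ({True} \<times> S)) = 1 - measure (measure_pmf (KK E n m ?x)) ({True} \<times> S)"
    using measure_pmf.prob_compl[of "{True} \<times> S" "KK E n m ?x"] by (simp add: Compl_eq_Diff_UNIV)
  also have "measure (measure_pmf (KK E n m ?x)) ({True} \<times> S) = ?U * (card (N \<inter> S) / card N)"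
    unfolding KK_def using U finN
    by (simp add: measure_pmf_prob_product measure_pmf_single measure_pmf_of_set N_def)
  also have "1 - ?U * (card (N \<inter> S) / card N) \<le> 1 - ?U / ?D"
  proof -
    have "?U / ?D \<le> ?U / card N" using U ND N1 by (intro divide_left_mono) auto
    also have "\<dots> \<le> ?U * (card (N \<inter> S) / card N)"
    proof -
      have "?U * 1 \<le> ?U * card (N \<inter> S)" using U cN by (intro mult_left_mono) auto
      then have "?U / card N \<le> ?U * card (N \<inter> S) / card N" by (intro divide_right_mono) auto
      then show ?thesis by simp
    qed
    finally show ?thesis by simp
  qed
  finally have "measure (measure_pmf (stepT n (KK E n m) t S)) {S} \<le> 1 - ?U / ?D" .
  then show ?thesis by (simp add: measure_pmf.emeasure_eq_measure ennreal_leI)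
qed



lemma bridge:
  fixes K :: "nat \<times> nat \<Rightarrow> (bool \<times> nat) pmf"
  assumes cong: "\<And>\<omega> \<omega>'. (\<And>x. x \<in> J \<Longrightarrow> \<omega> x = \<omega>' x) \<Longrightarrow> Q \<omega> = Q \<omega>'" and finJ: "finite J"
  shows "measure (PiM UNIV (\<lambda>x. measure_pmf (K x))) {\<omega> \<in> space (PiM UNIV (\<lambda>x. measure_pmf (K x))). Q \<omega>}
        = measure_pmf.prob (Pi_pmf J (False, 0) K) {f. Q f}"
proof -
  let ?M = "\<lambda>x. measure_pmf (K x)"
  interpret product_prob_space ?M UNIV
    by unfold_locales (simp add: prob_space_measure_pmf)
  define X where "X = {x \<in> PiE J (\<lambda>_. UNIV). Q x}"
  have ev: "{\<omega> \<in> space (PiM UNIV ?M). Q \<omega>} = prod_emb UNIV ?M J X"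
  proof -
    have "Q (restrict \<omega> J) = Q \<omega>" for \<omega> by (rule cong) simp
    then show ?thesis by (auto simp: prod_emb_def X_def space_PiM)
  qed
  have Xs: "X \<in> sets (PiM J ?M)"
  proof (rule sets.countable)
    fix a assume a: "a \<in> X"
    then have "a \<in> extensional J" by (simp add: X_def PiE_def)
    then have "{a} = PiE J (\<lambda>i. {a i})" by (simp add: PiE_singleton)
    also have "\<dots> \<in> sets (PiM J ?M)" using finJ by (intro sets_PiM_I_finite) auto
    finally show "{a} \<in> sets (PiM J ?M)" .
  next
    have "countable (PiE J (\<lambda>_. UNIV :: (bool \<times> nat) set))" using finJ by (intro countable_PiE) auto
    then show "countable X" unfolding X_def by (rule countable_subset[rotated]) auto
  qed
  have meas: "(\<lambda>f. restrict f J) \<in> measurable (measure_pmf (Pi_pmf J (False, 0) K)) (PiM J ?M)"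
    by (auto simp: measurable_def space_PiM)
  have eqM: "distr (measure_pmf (Pi_pmf J (False, 0) K)) (PiM J ?M) (\<lambda>f. restrict f J) = PiM J ?M"
  proof (rule PiM_eqI[OF finJ])
    show "sets (distr (measure_pmf (Pi_pmf J (False, 0) K)) (PiM J ?M) (\<lambda>f. restrict f J)) = sets (PiM J ?M)"
      by simp
  next
    fix A assume A: "\<And>i. i \<in> J \<Longrightarrow> A i \<in> sets (?M i)"
    have "emeasure (distr (measure_pmf (Pi_pmf J (False, 0) K)) (PiM J ?M) (\<lambda>f. restrict f J)) (PiE J A)
        = emeasure (measure_pmf (Pi_pmf J (False, 0) K)) ((\<lambda>f. restrict f J) -` PiE J A \<inter> space (measure_pmf (Pi_pmf J (False, 0) K)))"
      using A finJ by (intro emeasure_distr meas sets_PiM_I_finite) auto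
    also have "(\<lambda>f. restrict f J) -` PiE J A \<inter> space (measure_pmf (Pi_pmf J (False, 0) K)) = Pi J A"
      by (auto simp: PiE_def Pi_def)
    also have "emeasure (measure_pmf (Pi_pmf J (False, 0) K)) (Pi J A) = ennreal (\<Prod>x\<in>J. measure (?M x) (A x))"
      using finJ by (simp add: measure_pmf.emeasure_eq_measure measure_Pi_pmf_Pi)
    also have "\<dots> = (\<Prod>x\<in>J. emeasure (?M x) (A x))"
      by (simp add: measure_pmf.emeasure_eq_measure prod_ennreal)
    finally show "emeasure (distr (measure_pmf (Pi_pmf J (False, 0) K)) (PiM J ?M) (\<lambda>f. restrict f J)) (PiE J A)
        = (\<Prod>x\<in>J. emeasure (?M x) (A x))" .
  qed
  have "measure (PiM UNIV ?M) {\<omega> \<in> space (PiM UNIV ?M). Q \<omega>} = measure (PiM J ?M) X"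
    unfolding ev measure_def using emeasure_PiM_emb'[of J X] finJ Xs by simp
  also have "\<dots> = measure (measure_pmf (Pi_pmf J (False, 0) K)) ((\<lambda>f. restrict f J) -` X \<inter> space (measure_pmf (Pi_pmf J (False, 0) K)))"
    by (subst eqM[symmetric]) (rule measure_distr[OF meas Xs])
  also have "(\<lambda>f. restrict f J) -` X \<inter> space (measure_pmf (Pi_pmf J (False, 0) K)) = {f. Q f}"
  proof -
    have "Q (restrict \<omega> J) = Q \<omega>" for \<omega> by (rule cong) simp
    then show ?thesis by (auto simp: X_def)
  qed
  finally show ?thesis .
qed



lemma infS_sub: "infS n S \<omega> t \<subseteq> S \<union> {1..n}"
  by (induction t) (auto simp: stepf_def)

lemma tau_iff:
  assumes N: "1 \<le> N"
  shows "tau n istar \<omega> l > enat N \<longleftrightarrow> card (infS n {istar} \<omega> N) < l"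
proof -
  have fin: "finite (infS n {istar} \<omega> t)" for t using infS_sub[of n "{istar}" \<omega> t]
    by (rule finite_subset) auto
  have mono: "s \<le> t \<Longrightarrow> card (infS n {istar} \<omega> s) \<le> card (infS n {istar} \<omega> t)" for s t
    by (intro card_mono fin infS_mono2)
  show ?thesis
  proof
    assume A: "tau n istar \<omega> l > enat N"
    show "card (infS n {istar} \<omega> N) < l"
    proof (rule ccontr)
      assume "\<not> ?thesis"
      then have c: "card (infected n istar \<omega> N) \<ge> l" by (simp add: infected_infS)
      then have ex: "\<exists>j\<ge>1. card (infected n istar \<omega> j) \<ge> l" using N by blast
      have "(LEAST j. j \<ge> 1 \<and> card (infected n istar \<omega> j) \<ge> l) \<le> N"
        using c N by (intro Least_le) auto
      then show False using A ex by (simp add: tau_def)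
    qed
  next
    assume B: "card (infS n {istar} \<omega> N) < l"
    show "tau n istar \<omega> l > enat N"
    proof (cases "\<exists>j\<ge>1. card (infected n istar \<omega> j) \<ge> l")
      case True
      let ?j0 = "LEAST j. j \<ge> 1 \<and> card (infected n istar \<omega> j) \<ge> l"
      have j0: "?j0 \<ge> 1 \<and> card (infected n istar \<omega> ?j0) \<ge> l"
        using True by (rule LeastI_ex)
      have "N < ?j0"
      proof (rule ccontr)
        assume "\<not> N < ?j0"
        then have "card (infS n {istar} \<omega> ?j0) \<le> card (infS n {istar} \<omega> N)" by (intro mono) auto
        then show False using j0 B by (simp add: infected_infS)
      qed
      then show ?thesis using True by (simp add: tau_def)
    next
      case False then show ?thesis unfolding tau_def by auto
    qed
  qed
qed

lemma tau_pos: "tau n istar \<omega> l > enat 0"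
proof (cases "\<exists>j\<ge>1. card (infected n istar \<omega> j) \<ge> l")
  case True
  have "(LEAST j. j \<ge> 1 \<and> card (infected n istar \<omega> j) \<ge> l) \<ge> 1"
    using True by (metis (mono_tags, lifting) LeastI_ex)
  then show ?thesis using True unfolding tau_def by simp
next
  case False then show ?thesis unfolding tau_def by auto
qed

theorem mainTheorem15:
  fixes E :: "nat \<Rightarrow> nat \<Rightarrow> bool" and n m istar l j :: nat
  assumes sym: "\<And>u v. E u v \<Longrightarrow> E v u"
    and irrefl: "\<And>u. \<not> E u u"
    and verts: "\<And>u v. E u v \<Longrightarrow> u \<in> {1..n+m} \<and> v \<in> {1..n+m}"
    and istar: "istar \<in> {1..n}"
    and conn: "hon_connected E n"
    and l: "1 \<le> l" "l \<le> n"
  shows "measure (noisy_space E n m)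
           {\<omega> \<in> space (noisy_space E n m). tau n istar \<omega> l > enat (l * j)}
         \<le> real l * (1 - Upsilon E n m / real (dhon_max E n)) ^ j"
proof -
  let ?U = "Upsilon E n m" and ?D = "dhon_max E n"
  define q where "q = 1 - ?U / ?D"
  have n1: "1 \<le> n" using l by simp
  have U: "0 \<le> ?U" "?U \<le> 1" using Upsilon_bounds[OF verts n1] by auto
  have q0: "0 \<le> q"
  proof (cases "?D = 0")
    case True then show ?thesis by (simp add: q_def)
  next
    case False
    then have "1 \<le> real ?D" by simp
    then have "?U / ?D \<le> ?U / 1" using U by (intro divide_left_mono) auto
    then have "?U / ?D \<le> ?U" by simp
    then show ?thesis using U by (simp add: q_def)
  qed
  have sp: "noisy_space E n m = PiM UNIV (\<lambda>x. measure_pmf (KK E n m x))"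
    unfolding noisy_space_def KK_def by (intro arg_cong[where f="PiM UNIV"]) (auto simp: fun_eq_iff)
  let ?N = "l * j"
  let ?J = "Jset n ?N"
  have finJ: "finite ?J" by (simp add: Jset_def)
  have br: "measure (noisy_space E n m) {\<omega> \<in> space (noisy_space E n m). tau n istar \<omega> l > enat ?N}
      = measure_pmf.prob (Pi_pmf ?J (False, 0) (KK E n m)) {f. tau n istar f l > enat ?N}"
    unfolding sp
  proof (rule bridge[OF _ finJ])
    fix \<omega> \<omega>' :: "nat \<times> nat \<Rightarrow> bool \<times> nat" assume eq: "\<And>x. x \<in> ?J \<Longrightarrow> \<omega> x = \<omega>' x"
    show "(tau n istar \<omega> l > enat ?N) = (tau n istar \<omega>' l > enat ?N)"
    proof (cases "j = 0")
      case True then show ?thesis using tau_pos by simp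
    next
      case False
      then have N1: "1 \<le> ?N" using l by simp
      have "infS n {istar} \<omega> ?N = infS n {istar} \<omega>' ?N"
        by (rule infS_cong) (use eq in \<open>auto simp: Jset_def\<close>)
      then show ?thesis using tau_iff[OF N1] by simp
    qed
  qed
  show ?thesis
  proof (cases "j = 0")
    case True
    have "measure_pmf.prob (Pi_pmf ?J (False, 0) (KK E n m)) {f. tau n istar f l > enat ?N} \<le> 1"
      by (rule measure_pmf.prob_le_1)
    also have "1 \<le> real l * (1 - ?U / ?D) ^ j" using True l by simp
    finally show ?thesis using br by simp
  next
    case False
    then have N1: "1 \<le> ?N" using l by simp
    have "{f. tau n istar f l > enat ?N} = (\<lambda>f. infS n {istar} f ?N) -` {T. card T < l}"
      using tau_iff[OF N1] by auto
    then have "measure_pmf.prob (Pi_pmf ?J (False, 0) (KK E n m)) {f. tau n istar f l > enat ?N}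
       = measure_pmf.prob (map_pmf (\<lambda>f. infS n {istar} f ?N) (Pi_pmf ?J (False, 0) (KK E n m))) {T. card T < l}"
      by simp
    also have "\<dots> = measure_pmf.prob (chain n (KK E n m) 0 {istar} (l * j)) {T. card T < l}"
      by (simp add: chain_bridge)
    also have "\<dots> \<le> real l * q ^ j"
    proof -
      have "emeasure (measure_pmf (chain n (KK E n m) 0 {istar} (l * j))) {T. card T < l} \<le> ennreal (real l * q ^ j)"
        by (rule lemC[where q = q]) (use lemA[OF sym verts conn] istar l q0 in \<open>auto simp: q_def\<close>)
      then show ?thesis using q0
        by (simp add: measure_pmf.emeasure_eq_measure ennreal_le_iff)
    qed
    finally show ?thesis using br by (simp add: q_def)
  qed
qed


end
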